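(* Let $n\ge 2$, let $\lambda_1\ge\lambda_2\ge\dots\ge\lambda_n$ be real numbers, and let $w_1,\dots,w_n$ be non-negative real numbers with $\sum_{i=1}^n w_i=1$. Let $\mu_1\ge\dots\ge\mu_{n-1}$ be the roots (which are all real) of the degree-$(n-1)$ polynomial $$p(x)=\sum_{i=1}^n w_i\prod_{j\ne i}(x-\lambda_j).$$ Set $U_\ell:=\sum_{i=\ell}^n w_i$ and $L_{r+1}:=\sum_{i=1}^{r+1}w_i$. Then for all integers $1\le \ell\le r\le n-1$ such that $U_\ell\neq 0$ and $L_{r+1}\neq 0$, $$\sum_{j=\ell}^r\lambda_{j+1}+\sum_{j=\ell}^r\frac{w_{j+1}}{L_{r+1}}(\lambda_\ell-\lambda_{j+1})\;\le\;\sum_{j=\ell}^r\mu_j\;\le\;\sum_{j=\ell}^r\lambda_j-\sum_{j=\ell}^r\frac{w_j}{U_\ell}(\lambda_j-\lambda_{r+1}).$$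
   Context: Roots are counted with multiplicity and listed in non-increasing order. *)

theory Defs
  imports "HOL-Computational_Algebra.Polynomial"
begin

definition interlace_poly :: "nat \<Rightarrow> (nat \<Rightarrow> real) \<Rightarrow> (nat \<Rightarrow> real) \<Rightarrow> real poly" where
  "interlace_poly n lam w =
     (\<Sum>i=1..n. smult (w i) (\<Prod>j\<in>{1..n} - {i}. [:- lam j, 1:]))"

end

theory Submission
  imports Defs
begin

lemma lin_mult_coeff_Suc:
  fixes Q :: "real poly"
  shows "coeff ([:-a, 1:] * Q) (Suc k) = coeff Q k - a * coeff Q (Suc k)"
  by simp

lemma prod_lin_props:
  fixes c :: "'b \<Rightarrow> real"
  assumes "finite S"
  shows "degree (\<Prod>j\<in>S. [:-c j, 1:]) = card S \<and> coeff (\<Prod>j\<in>S. [:-c j, 1:]) (card S) = 1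
     \<and> (S \<noteq> {} \<longrightarrow> coeff (\<Prod>j\<in>S. [:-c j, 1:]) (card S - 1) = - (\<Sum>j\<in>S. c j))"
  using assms
proof (induction S rule: finite_induct)
  case empty
  then show ?case by simp
next
  case (insert x S)
  let ?Q = "\<Prod>j\<in>S. [:-c j, 1:]"
  have P: "(\<Prod>j\<in>insert x S. [:-c j, 1:]) = [:-c x, 1:] * ?Q" using insert by simp
  have cS: "card (insert x S) = Suc (card S)" using insert by simp
  have Q0: "?Q \<noteq> 0" using insert.IH by auto
  have deg: "degree ([:-c x, 1:] * ?Q) = Suc (card S)"
    using Q0 insert.IH by (subst degree_mult_eq) auto
  have z: "coeff ?Q (Suc (card S)) = 0" using insert.IH by (simp add: coeff_eq_0)
  have hi: "coeff ([:-c x, 1:] * ?Q) (Suc (card S)) = 1"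
    using insert.IH z by (simp only: lin_mult_coeff_Suc)
  have lo: "coeff ([:-c x, 1:] * ?Q) (card S) = - (\<Sum>j\<in>insert x S. c j)"
  proof (cases "S = {}")
    case True
    then show ?thesis by simp
  next
    case False
    then obtain m where m: "card S = Suc m" using insert.hyps(1) by (cases "card S") auto
    have "coeff ([:-c x, 1:] * ?Q) (Suc m) = coeff ?Q m - c x * coeff ?Q (Suc m)"
      by (rule lin_mult_coeff_Suc)
    also have "\<dots> = - (\<Sum>j\<in>S. c j) - c x" using insert.IH False m by simp
    finally show ?thesis using insert.hyps m by simp
  qed
  show ?case unfolding P cS using deg hi lo by simp
qed

definition PP :: "nat \<Rightarrow> nat \<Rightarrow> (nat \<Rightarrow> real) \<Rightarrow> (nat \<Rightarrow> real) \<Rightarrow> real poly" where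
  "PP a b lam w = (\<Sum>i=a..b. smult (w i) (\<Prod>j\<in>{a..b} - {i}. [:- lam j, 1:]))"

lemma poly_PP: "poly (PP a b lam w) t = (\<Sum>i=a..b. w i * (\<Prod>j\<in>{a..b} - {i}. t - lam j))"
  by (simp add: PP_def poly_sum poly_prod)

lemma prod_sign:
  fixes f :: "'b \<Rightarrow> real"
  assumes "finite S"
  shows "(\<Prod>m\<in>S. x - f m) = (-1) ^ card {m\<in>S. x < f m} * (\<Prod>m\<in>S. \<bar>x - f m\<bar>)"
  using assms
proof (induction S rule: finite_induct)
  case empty
  then show ?case by simp
next
  case (insert y S)
  show ?case
  proof (cases "x < f y")
    case True
    then have "{m\<in>insert y S. x < f m} = insert y {m\<in>S. x < f m}" by auto
    moreover have "y \<notin> {m\<in>S. x < f m}" using insert by auto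
    ultimately have c: "card {m\<in>insert y S. x < f m} = Suc (card {m\<in>S. x < f m})"
      using insert by simp
    have "(\<Prod>m\<in>insert y S. x - f m) = (x - f y) * ((-1) ^ card {m\<in>S. x < f m} * (\<Prod>m\<in>S. \<bar>x - f m\<bar>))"
      using insert by simp
    also have "\<dots> = (-1) ^ Suc (card {m\<in>S. x < f m}) * (\<bar>x - f y\<bar> * (\<Prod>m\<in>S. \<bar>x - f m\<bar>))"
      using True by (simp add: abs_of_neg algebra_simps)
    also have "\<dots> = (-1) ^ card {m\<in>insert y S. x < f m} * (\<Prod>m\<in>insert y S. \<bar>x - f m\<bar>)"
      using insert c by simp
    finally show ?thesis .
  next
    case False
    then have c: "{m\<in>insert y S. x < f m} = {m\<in>S. x < f m}" by auto
    have "(\<Prod>m\<in>insert y S. x - f m) = (x - f y) * ((-1) ^ card {m\<in>S. x < f m} * (\<Prod>m\<in>S. \<bar>x - f m\<bar>))"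
      using insert by simp
    also have "\<dots> = (-1) ^ card {m\<in>S. x < f m} * (\<bar>x - f y\<bar> * (\<Prod>m\<in>S. \<bar>x - f m\<bar>))"
      using False by (simp add: abs_of_nonneg)
    also have "\<dots> = (-1) ^ card {m\<in>insert y S. x < f m} * (\<Prod>m\<in>insert y S. \<bar>x - f m\<bar>)"
      using insert c by simp
    finally show ?thesis .
  qed
qed

lemma PP_coeffs:
  assumes "a < b"
  shows "degree (PP a b lam w) \<le> b - a \<and> coeff (PP a b lam w) (b - a) = (\<Sum>i=a..b. w i)
    \<and> coeff (PP a b lam w) (b - a - 1) = - (\<Sum>i=a..b. w i * (\<Sum>j\<in>{a..b} - {i}. lam j))"
proof -
  have card: "\<And>i. i \<in> {a..b} \<Longrightarrow> card ({a..b} - {i}) = b - a" by simp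
  have ne: "\<And>i. i \<in> {a..b} \<Longrightarrow> {a..b} - {i} \<noteq> {}"
    using assms by (metis atLeastAtMost_iff card card_0_eq diff_is_0_eq finite_Diff finite_atLeastAtMost not_le)
  have props: "\<And>i. i \<in> {a..b} \<Longrightarrow> degree (\<Prod>j\<in>{a..b} - {i}. [:- lam j, 1:]) = b - a
     \<and> coeff (\<Prod>j\<in>{a..b} - {i}. [:- lam j, 1:]) (b - a) = 1
     \<and> coeff (\<Prod>j\<in>{a..b} - {i}. [:- lam j, 1:]) (b - a - 1) = - (\<Sum>j\<in>{a..b} - {i}. lam j)"
  proof -
    fix i assume i: "i \<in> {a..b}"
    have "finite ({a..b} - {i})" by simp
    from prod_lin_props[OF this, of lam] card[OF i] ne[OF i]
    show "degree (\<Prod>j\<in>{a..b} - {i}. [:- lam j, 1:]) = b - a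
     \<and> coeff (\<Prod>j\<in>{a..b} - {i}. [:- lam j, 1:]) (b - a) = 1
     \<and> coeff (\<Prod>j\<in>{a..b} - {i}. [:- lam j, 1:]) (b - a - 1) = - (\<Sum>j\<in>{a..b} - {i}. lam j)"
      by simp
  qed
  have "degree (PP a b lam w) \<le> b - a"
    unfolding PP_def
  proof (rule degree_sum_le)
    fix i assume i: "i \<in> {a..b}"
    show "degree (smult (w i) (\<Prod>j\<in>{a..b} - {i}. [:- lam j, 1:])) \<le> b - a"
      using degree_smult_le[of "w i" "\<Prod>j\<in>{a..b} - {i}. [:- lam j, 1:]"] props[OF i] by linarith
  qed simp
  moreover have "coeff (PP a b lam w) (b - a) = (\<Sum>i=a..b. w i)"
    unfolding PP_def coeff_sum coeff_smult using props by (intro sum.cong) auto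
  moreover have "coeff (PP a b lam w) (b - a - 1) = - (\<Sum>i=a..b. w i * (\<Sum>j\<in>{a..b} - {i}. lam j))"
  proof -
    have "(\<Sum>i=a..b. w i * coeff (\<Prod>j\<in>{a..b} - {i}. [:- lam j, 1:]) (b - a - 1))
        = (\<Sum>i=a..b. - (w i * (\<Sum>j\<in>{a..b} - {i}. lam j)))"
      by (rule sum.cong) (use props in auto)
    then show ?thesis unfolding PP_def coeff_sum coeff_smult by (simp add: sum_negf)
  qed
  ultimately show ?thesis by blast
qed

lemma prod_lin_dvd:
  fixes f :: "'b \<Rightarrow> real"
  assumes "finite S" "inj_on f S" "\<And>j. j \<in> S \<Longrightarrow> poly p (f j) = 0"
  shows "(\<Prod>j\<in>S. [:- f j, 1:]) dvd p"
  using assms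
proof (induction S rule: finite_induct)
  case empty
  then show ?case by simp
next
  case (insert x S)
  then have "(\<Prod>j\<in>S. [:- f j, 1:]) dvd p" by auto
  then obtain q where q: "p = (\<Prod>j\<in>S. [:- f j, 1:]) * q" by (auto simp: dvd_def)
  have "poly (\<Prod>j\<in>S. [:- f j, 1:]) (f x) \<noteq> 0"
    using insert.prems(1) insert.hyps by (auto simp: poly_prod inj_on_def)
  moreover have "poly p (f x) = 0" using insert.prems by auto
  ultimately have "poly q (f x) = 0" using q by simp
  then have "[:- f x, 1:] dvd q" by (simp add: poly_eq_0_iff_dvd)
  then obtain k where k: "q = [:- f x, 1:] * k" by (auto simp: dvd_def)
  have e: "(\<Prod>j\<in>insert x S. [:- f j, 1:]) = [:- f x, 1:] * (\<Prod>j\<in>S. [:- f j, 1:])"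
    by (rule prod.insert[OF insert.hyps])
  have "p = (\<Prod>j\<in>insert x S. [:- f j, 1:]) * k" unfolding q k e by (simp only: mult_ac)
  then show ?case by (rule dvdI)
qed

definition sdec :: "nat \<Rightarrow> nat \<Rightarrow> (nat \<Rightarrow> real) \<Rightarrow> bool" where
  "sdec a b lam \<longleftrightarrow> (\<forall>i j. a \<le> i \<longrightarrow> i < j \<longrightarrow> j \<le> b \<longrightarrow> lam j < lam i)"

definition interl :: "nat \<Rightarrow> nat \<Rightarrow> (nat \<Rightarrow> real) \<Rightarrow> (nat \<Rightarrow> real) \<Rightarrow> bool" where
  "interl a b lam nu \<longleftrightarrow> (\<forall>j. a \<le> j \<longrightarrow> j < b \<longrightarrow> lam (Suc j) < nu j \<and> nu j < lam j)"

lemma sdec_le: "sdec a b lam \<Longrightarrow> a \<le> i \<Longrightarrow> i \<le> j \<Longrightarrow> j \<le> b \<Longrightarrow> lam j \<le> lam i"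
  unfolding sdec_def by (cases "i = j") (auto simp: less_imp_le order.order_iff_strict)

lemma neg1_sq: "(-1::real) ^ k * (-1) ^ k = 1"
  by (simp flip: power_mult_distrib)

lemma poly_PP_at:
  assumes "sdec a b lam" "a \<le> i" "i \<le> b"
  shows "poly (PP a b lam w) (lam i) = w i * (\<Prod>j\<in>{a..b} - {i}. lam i - lam j)"
proof -
  have z: "(\<Sum>m\<in>{a..b} - {i}. w m * (\<Prod>j\<in>{a..b} - {m}. lam i - lam j)) = 0"
  proof (rule sum.neutral, intro ballI)
    fix m assume m: "m \<in> {a..b} - {i}"
    have "i \<in> {a..b} - {m}" using m assms by auto
    then have "(\<Prod>j\<in>{a..b} - {m}. lam i - lam j) = 0"
      by (intro prod_zero) auto
    then show "w m * (\<Prod>j\<in>{a..b} - {m}. lam i - lam j) = 0" by simp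
  qed
  have "poly (PP a b lam w) (lam i) = w i * (\<Prod>j\<in>{a..b} - {i}. lam i - lam j)
       + (\<Sum>m\<in>{a..b} - {i}. w m * (\<Prod>j\<in>{a..b} - {m}. lam i - lam j))"
    unfolding poly_PP using assms by (subst sum.remove[of _ i]) auto
  then show ?thesis using z by simp
qed

lemma poly_PP_at_sign:
  assumes "sdec a b lam" "a \<le> i" "i \<le> b" "w i > 0"
  shows "(-1) ^ (i - a) * poly (PP a b lam w) (lam i) > 0"
proof -
  have set: "{m\<in>{a..b} - {i}. lam i < lam m} = {a..<i}"
    using assms(1,2,3) unfolding sdec_def by (auto simp: not_less) (meson le_less_trans linorder_not_le not_less_iff_gr_or_eq)
  have pos: "(\<Prod>m\<in>{a..b} - {i}. \<bar>lam i - lam m\<bar>) > 0"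
  proof (rule prod_pos)
    fix m assume m: "m \<in> {a..b} - {i}"
    then have "m < i \<or> i < m" by auto
    then have "lam m \<noteq> lam i" using m assms(1,2,3) unfolding sdec_def by (metis DiffE atLeastAtMost_iff less_irrefl)
    then show "\<bar>lam i - lam m\<bar> > 0" by simp
  qed
  have ps: "(\<Prod>m\<in>{a..b} - {i}. lam i - lam m) = (-1) ^ (i - a) * (\<Prod>m\<in>{a..b} - {i}. \<bar>lam i - lam m\<bar>)"
    using prod_sign[of "{a..b} - {i}" "lam i" lam] unfolding set by simp
  have "(-1) ^ (i - a) * poly (PP a b lam w) (lam i)
      = w i * (((-1) ^ (i - a) * (-1) ^ (i - a)) * (\<Prod>m\<in>{a..b} - {i}. \<bar>lam i - lam m\<bar>))"
    unfolding poly_PP_at[OF assms(1-3)] ps by (simp add: mult_ac)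
  also have "\<dots> > 0" unfolding neg1_sq using pos assms(4) by simp
  finally show ?thesis .
qed

lemma PP_roots:
  assumes "a < b" "sdec a b lam" "\<And>i. a \<le> i \<Longrightarrow> i \<le> b \<Longrightarrow> w i > 0"
  shows "\<exists>nu. interl a b lam nu \<and> PP a b lam w = smult (\<Sum>i=a..b. w i) (\<Prod>j=a..b-1. [:- nu j, 1:])"
proof -
  have ex: "\<forall>j\<in>{a..<b}. \<exists>t. lam (Suc j) < t \<and> t < lam j \<and> poly (PP a b lam w) t = 0"
  proof
    fix j assume j: "j \<in> {a..<b}"
    have lt: "lam (Suc j) < lam j" using assms(2) j unfolding sdec_def by auto
    have s1: "(-1) ^ (j - a) * poly (PP a b lam w) (lam j) > 0"
      using j by (intro poly_PP_at_sign assms) auto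
    have s2: "(-1) ^ (Suc j - a) * poly (PP a b lam w) (lam (Suc j)) > 0"
      using j by (intro poly_PP_at_sign assms) auto
    have "Suc j - a = Suc (j - a)" using j by auto
    then have s2': "- ((-1) ^ (j - a) * poly (PP a b lam w) (lam (Suc j))) > 0" using s2 by simp
    have "poly (PP a b lam w) (lam (Suc j)) * poly (PP a b lam w) (lam j)
       = - (((-1) ^ (j - a) * (-1) ^ (j - a)) * (- ((-1) ^ (j - a) * poly (PP a b lam w) (lam (Suc j))) * ((-1) ^ (j - a) * poly (PP a b lam w) (lam j))))"
      by (simp add: neg1_sq)
    also have "\<dots> < 0" unfolding neg1_sq using mult_pos_pos[OF s2' s1] by simp
    finally show "\<exists>t. lam (Suc j) < t \<and> t < lam j \<and> poly (PP a b lam w) t = 0"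
      using poly_IVT[OF lt] by blast
  qed
  then obtain nu where nu: "\<And>j. j \<in> {a..<b} \<Longrightarrow> lam (Suc j) < nu j \<and> nu j < lam j \<and> poly (PP a b lam w) (nu j) = 0"
    by metis
  have il: "interl a b lam nu" unfolding interl_def using nu by auto
  have dec: "nu j' < nu j" if "a \<le> j" "j < j'" "j' < b" for j j'
  proof -
    have "nu j' < lam j'" using nu that by auto
    also have "lam j' \<le> lam (Suc j)" using sdec_le[OF assms(2)] that by auto
    also have "\<dots> < nu j" using nu that by auto
    finally show ?thesis .
  qed
  have inj: "inj_on nu {a..b-1}"
  proof (rule inj_onI)
    fix x y assume "x \<in> {a..b-1}" "y \<in> {a..b-1}" "nu x = nu y"
    have xb: "x < b" "y < b" "a \<le> x" "a \<le> y" using \<open>x \<in> {a..b-1}\<close> \<open>y \<in> {a..b-1}\<close> assms(1) by auto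
    show "x = y"
    proof (cases x y rule: linorder_cases)
      case less
      then show ?thesis using dec[of x y] xb \<open>nu x = nu y\<close> by auto
    next
      case greater
      then show ?thesis using dec[of y x] xb \<open>nu x = nu y\<close> by auto
    qed
  qed
  let ?Pi = "\<Prod>j=a..b-1. [:- nu j, 1:]"
  have "?Pi dvd PP a b lam w"
    by (rule prod_lin_dvd[OF _ inj]) (use nu assms(1) in auto)
  then obtain q where q: "PP a b lam w = ?Pi * q" by (auto simp: dvd_def)
  have cardI: "card {a..b-1} = b - a" using assms(1) by simp
  have pip: "degree ?Pi = b - a \<and> coeff ?Pi (b - a) = 1"
    using prod_lin_props[of "{a..b-1}" nu] cardI by simp
  have W: "(\<Sum>i=a..b. w i) > 0" using assms(1,3) by (intro sum_pos) auto
  have co: "degree (PP a b lam w) \<le> b - a \<and> coeff (PP a b lam w) (b - a) = (\<Sum>i=a..b. w i)"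
    using PP_coeffs[OF assms(1)] by blast
  have PPnz: "PP a b lam w \<noteq> 0" using co W by auto
  then have qnz: "q \<noteq> 0" using q by auto
  have Pinz: "?Pi \<noteq> 0" using pip by auto
  have "degree (PP a b lam w) = b - a + degree q" using q qnz Pinz pip by (simp add: degree_mult_eq)
  then have dq: "degree q = 0" using co by simp
  then obtain c where c: "q = [:c:]" by (metis degree_eq_zeroE)
  have "coeff (PP a b lam w) (b - a) = c" using pip unfolding q c by simp
  then have "c = (\<Sum>i=a..b. w i)" using co by simp
  then have "PP a b lam w = smult (\<Sum>i=a..b. w i) ?Pi" using q c by simp
  then show ?thesis using il by blast
qed

lemma root_loc:
  assumes "sdec a b lam" "interl a b lam nu" "a \<le> j" "j < b" "lam (Suc j) < t" "t < lam j"
  shows "nu j < t \<Longrightarrow> (-1) ^ (j - a) * (\<Prod>m=a..b-1. t - nu m) > 0"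
    and "t < nu j \<Longrightarrow> (-1) ^ (j - a) * (\<Prod>m=a..b-1. t - nu m) < 0"
proof -
  have lo: "t < nu m" if "a \<le> m" "m < j" for m
  proof -
    have "t < lam j" by fact
    also have "lam j \<le> lam (Suc m)" using sdec_le[OF assms(1)] that assms by auto
    also have "\<dots> < nu m" using assms(2) that assms(4) unfolding interl_def by auto
    finally show ?thesis .
  qed
  have hi: "nu m < t" if "j < m" "m < b" for m
  proof -
    have "nu m < lam m" using assms(2) that assms(3) unfolding interl_def by auto
    also have "lam m \<le> lam (Suc j)" using sdec_le[OF assms(1)] that assms by auto
    also have "\<dots> < t" by fact
    finally show ?thesis .
  qed
  have bj: "b - 1 \<ge> j" using assms by auto
  {
    assume lt: "nu j < t"
    have iff: "t < nu m \<longleftrightarrow> m < j" "nu m \<noteq> t" if "a \<le> m" "m \<le> b - 1" for m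
    proof -
      have mb: "m < b" using that assms(4) by linarith
      have "(t < nu m \<longleftrightarrow> m < j) \<and> nu m \<noteq> t"
      proof (cases m j rule: linorder_cases)
        case less then show ?thesis using lo[of m] that by auto
      next
        case equal then show ?thesis using lt by auto
      next
        case greater then show ?thesis using hi[of m] mb by auto
      qed
      then show "t < nu m \<longleftrightarrow> m < j" "nu m \<noteq> t" by auto
    qed
    have set: "{m\<in>{a..b-1}. t < nu m} = {a..<j}"
      using iff bj by auto
    have pos: "(\<Prod>m=a..b-1. \<bar>t - nu m\<bar>) > 0"
    proof (rule prod_pos)
      fix m assume m: "m \<in> {a..b-1}"
      have "nu m \<noteq> t" using iff m by auto
      then show "\<bar>t - nu m\<bar> > 0" by simp
    qed
    have "(-1) ^ (j - a) * (\<Prod>m=a..b-1. t - nu m) = ((-1) ^ (j - a) * (-1) ^ (j - a)) * (\<Prod>m=a..b-1. \<bar>t - nu m\<bar>)"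
      using prod_sign[of "{a..b-1}" t nu] unfolding set using assms(3) by simp
    then show "(-1) ^ (j - a) * (\<Prod>m=a..b-1. t - nu m) > 0" using pos by (simp add: neg1_sq)
  }
  {
    assume gt: "t < nu j"
    have iff: "t < nu m \<longleftrightarrow> m \<le> j" "nu m \<noteq> t" if "a \<le> m" "m \<le> b - 1" for m
    proof -
      have mb: "m < b" using that assms(4) by linarith
      have "(t < nu m \<longleftrightarrow> m \<le> j) \<and> nu m \<noteq> t"
      proof (cases m j rule: linorder_cases)
        case less then show ?thesis using lo[of m] that by auto
      next
        case equal then show ?thesis using gt by auto
      next
        case greater then show ?thesis using hi[of m] mb by auto
      qed
      then show "t < nu m \<longleftrightarrow> m \<le> j" "nu m \<noteq> t" by auto
    qed
    have set: "{m\<in>{a..b-1}. t < nu m} = {a..j}"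
      using iff bj by auto
    have pos: "(\<Prod>m=a..b-1. \<bar>t - nu m\<bar>) > 0"
    proof (rule prod_pos)
      fix m assume m: "m \<in> {a..b-1}"
      have "nu m \<noteq> t" using iff m by auto
      then show "\<bar>t - nu m\<bar> > 0" by simp
    qed
    have c: "card {a..j} = Suc (j - a)" using assms(3) by simp
    have "(-1) ^ (j - a) * (\<Prod>m=a..b-1. t - nu m) = - (((-1) ^ (j - a) * (-1) ^ (j - a)) * (\<Prod>m=a..b-1. \<bar>t - nu m\<bar>))"
      using prod_sign[of "{a..b-1}" t nu] unfolding set c by simp
    then show "(-1) ^ (j - a) * (\<Prod>m=a..b-1. t - nu m) < 0" using pos by (simp add: neg1_sq)
  }
qed

lemma lagrange_coeff:
  fixes x :: "'b \<Rightarrow> real" and D :: "real poly"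
  assumes fin: "finite K" and ne: "K \<noteq> {}" and inj: "inj_on x K" and deg: "degree D < card K"
  shows "coeff D (card K - 1) = (\<Sum>j\<in>K. poly D (x j) / (\<Prod>i\<in>K - {j}. x j - x i))"
proof -
  define d where "d j = (\<Prod>i\<in>K - {j}. x j - x i)" for j
  define L where "L = (\<Sum>j\<in>K. smult (poly D (x j) / d j) (\<Prod>i\<in>K - {j}. [:- x i, 1:]))"
  have dnz: "d j \<noteq> 0" if "j \<in> K" for j
    unfolding d_def using fin inj that by (auto simp: inj_on_def)
  have cK: "card (K - {j}) = card K - 1" if "j \<in> K" for j using fin that by simp
  have props: "degree (\<Prod>i\<in>K - {j}. [:- x i, 1:]) = card K - 1 \<and> coeff (\<Prod>i\<in>K - {j}. [:- x i, 1:]) (card K - 1) = 1"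
    if "j \<in> K" for j
    using prod_lin_props[of "K - {j}" x] fin cK[OF that] by simp
  have evalL: "poly L (x m) = poly D (x m)" if m: "m \<in> K" for m
  proof -
    have z: "(\<Sum>j\<in>K - {m}. poly D (x j) / d j * (\<Prod>i\<in>K - {j}. x m - x i)) = 0"
    proof (rule sum.neutral, intro ballI)
      fix j assume j: "j \<in> K - {m}"
      have "(\<Prod>i\<in>K - {j}. x m - x i) = 0" using j m fin by (intro prod_zero) auto
      then show "poly D (x j) / d j * (\<Prod>i\<in>K - {j}. x m - x i) = 0" by simp
    qed
    have "poly L (x m) = (\<Sum>j\<in>K. poly D (x j) / d j * (\<Prod>i\<in>K - {j}. x m - x i))"
      unfolding L_def by (simp add: poly_sum poly_prod)
    also have "\<dots> = poly D (x m) / d m * (\<Prod>i\<in>K - {m}. x m - x i)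
        + (\<Sum>j\<in>K - {m}. poly D (x j) / d j * (\<Prod>i\<in>K - {j}. x m - x i))"
      using fin m by (subst sum.remove[of _ m]) auto
    also have "\<dots> = poly D (x m)" using z dnz[OF m] unfolding d_def by simp
    finally show ?thesis .
  qed
  have degL: "degree L \<le> card K - 1"
    unfolding L_def
  proof (rule degree_sum_le)
    fix j assume j: "j \<in> K"
    show "degree (smult (poly D (x j) / d j) (\<Prod>i\<in>K - {j}. [:- x i, 1:])) \<le> card K - 1"
      using degree_smult_le[of "poly D (x j) / d j" "\<Prod>i\<in>K - {j}. [:- x i, 1:]"] props[OF j] by linarith
  qed (use fin in simp)
  have "D - L = 0"
  proof (rule ccontr)
    assume E: "D - L \<noteq> 0"
    have "degree (D - L) < card K"
    proof (rule degree_diff_less[OF deg])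
      have "card K > 0" using fin ne by (simp add: card_gt_0_iff)
      then show "degree L < card K" using degL by linarith
    qed
    moreover have "card {r. poly (D - L) r = 0} \<le> degree (D - L)" by (rule card_poly_roots_bound[OF E])
    moreover have "x ` K \<subseteq> {r. poly (D - L) r = 0}" using evalL by auto
    moreover have "finite {r. poly (D - L) r = 0}" using poly_roots_finite[OF E] .
    ultimately have "card (x ` K) < card K" using card_mono by (metis le_less_trans)
    then show False using card_image[OF inj] by simp
  qed
  then have DL: "D = L" by simp
  have "coeff D (card K - 1) = coeff L (card K - 1)" using DL by simp
  also have "\<dots> = (\<Sum>j\<in>K. poly D (x j) / d j * coeff (\<Prod>i\<in>K - {j}. [:- x i, 1:]) (card K - 1))"
    unfolding L_def coeff_sum coeff_smult by simp
  also have "\<dots> = (\<Sum>j\<in>K. poly D (x j) / d j)" using props by (intro sum.cong) auto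
  finally show ?thesis unfolding d_def .
qed

lemma prefix_bound:
  assumes ab: "a < b" and sd: "sdec a b lam" and wpos: "\<And>i. a \<le> i \<Longrightarrow> i \<le> b \<Longrightarrow> w i \<ge> 0"
    and il: "interl a b lam nu" and fac: "PP a b lam w = smult W (\<Prod>j=a..b-1. [:- nu j, 1:])"
    and W: "W > 0" and k: "a \<le> k" "k < b"
  shows "(\<Sum>j=a..k. nu j) \<le> (\<Sum>j=a..k. lam j) - (\<Sum>j=a..k. w j / W * (lam j - lam (Suc k)))"
proof -
  define K where "K = {a..k}"
  have finK: "finite K" and neK: "K \<noteq> {}" using k unfolding K_def by auto
  have cK: "card K = Suc k - a" unfolding K_def by simp
  have cK0: "card K > 0" using cK k by simp
  define G where "G = (\<Prod>j\<in>K. [:- nu j, 1:])"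
  define A where "A = (\<Prod>j\<in>K. [:- lam j, 1:])"
  have pG: "degree G = card K \<and> coeff G (card K) = 1 \<and> coeff G (card K - 1) = - (\<Sum>j\<in>K. nu j)"
    unfolding G_def using prod_lin_props[OF finK, of nu] neK by simp
  have pA: "degree A = card K \<and> coeff A (card K) = 1 \<and> coeff A (card K - 1) = - (\<Sum>j\<in>K. lam j)"
    unfolding A_def using prod_lin_props[OF finK, of lam] neK by simp
  have degD: "degree (G - A) < card K"
  proof -
    have "degree (G - A) \<le> card K - 1"
    proof (rule degree_le, intro allI impI)
      fix i assume i: "card K - 1 < i"
      show "coeff (G - A) i = 0"
      proof (cases "i = card K")
        case True then show ?thesis using pG pA by simp
      next
        case False
        then have "i > card K" using i by linarith
        then show ?thesis using pG pA by (simp add: coeff_eq_0)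
      qed
    qed
    then show ?thesis using cK0 by linarith
  qed
  have injK: "inj_on lam K"
    unfolding K_def inj_on_def using sd k unfolding sdec_def
    by (metis atLeastAtMost_iff linorder_neqE_nat less_irrefl order.strict_trans2 less_imp_le)
  have lag: "coeff (G - A) (card K - 1) = (\<Sum>j\<in>K. poly (G - A) (lam j) / (\<Prod>i\<in>K - {j}. lam j - lam i))"
    by (rule lagrange_coeff[OF finK neK injK degD])
  have lhs: "coeff (G - A) (card K - 1) = (\<Sum>j\<in>K. lam j) - (\<Sum>j\<in>K. nu j)"
    using pG pA by simp
  have tm: "poly (G - A) (lam j) / (\<Prod>i\<in>K - {j}. lam j - lam i) \<ge> w j / W * (lam j - lam (Suc k))"
    if j: "j \<in> K" for j
  proof -
    have ja: "a \<le> j" "j \<le> k" using j unfolding K_def by auto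
    have Az: "poly A (lam j) = 0" unfolding A_def poly_prod using j finK by (intro prod_zero) auto
    define d where "d = (\<Prod>i\<in>K - {j}. lam j - lam i)"
    define Bv where "Bv = (\<Prod>i\<in>{Suc k..b}. lam j - lam i)"
    define Hv where "Hv = (\<Prod>m\<in>{Suc k..b-1}. lam j - nu m)"
    define Cv where "Cv = (\<Prod>m\<in>{Suc k..b-1}. lam j - lam (Suc m))"
    have split1: "{a..b} - {j} = (K - {j}) \<union> {Suc k..b}" unfolding K_def using ja k by auto
    have jb: "j \<le> b" using ja k by simp
    have "(\<Prod>i\<in>{a..b} - {j}. lam j - lam i) = d * Bv"
      unfolding split1 d_def Bv_def by (rule prod.union_disjoint) (use k in \<open>auto simp: K_def\<close>)
    then have e1: "poly (PP a b lam w) (lam j) = w j * (d * Bv)"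
      using poly_PP_at[OF sd ja(1) jb, of w] by simp
    have split2: "{a..b-1} = K \<union> {Suc k..b-1}" unfolding K_def using ja k by auto
    have e2: "poly (PP a b lam w) (lam j) = W * (poly G (lam j) * Hv)"
    proof -
      have pGj: "poly G (lam j) = (\<Prod>m\<in>K. lam j - nu m)" unfolding G_def poly_prod by simp
      have "(\<Prod>m\<in>{a..b-1}. lam j - nu m) = (\<Prod>m\<in>K. lam j - nu m) * Hv"
        unfolding split2 Hv_def by (rule prod.union_disjoint) (use k in \<open>auto simp: K_def\<close>)
      then have "(\<Prod>m\<in>{a..b-1}. lam j - nu m) = poly G (lam j) * Hv" using pGj by simp
      then show ?thesis unfolding fac poly_smult poly_prod by simp
    qed
    have mrange: "a \<le> m \<and> m < b" if "m \<in> {Suc k..b-1}" for m using that k ab by auto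
    have Hpos: "Hv > 0" unfolding Hv_def
    proof (rule prod_pos)
      fix m assume m: "m \<in> {Suc k..b-1}"
      have "nu m < lam m" using il mrange[OF m] unfolding interl_def by auto
      also have "lam m \<le> lam j" using sdec_le[OF sd] m ja ab by auto
      finally show "0 < lam j - nu m" by simp
    qed
    have dnz: "d \<noteq> 0" unfolding d_def using finK injK j by (auto simp: inj_on_def)
    have bsplit: "Bv = (lam j - lam (Suc k)) * Cv"
    proof -
      have "{Suc k..b} = insert (Suc k) {Suc (Suc k)..b}" using k by auto
      then have "Bv = (lam j - lam (Suc k)) * (\<Prod>i\<in>{Suc (Suc k)..b}. lam j - lam i)"
        unfolding Bv_def by simp
      moreover have "(\<Prod>i\<in>{Suc (Suc k)..b}. lam j - lam i) = Cv"
      proof -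
        have "b = Suc (b - 1)" using ab by simp
        then have "(\<Prod>i\<in>{Suc (Suc k)..b}. lam j - lam i) = (\<Prod>i\<in>{Suc (Suc k)..Suc (b-1)}. lam j - lam i)"
          by simp
        also have "\<dots> = Cv" unfolding Cv_def by (rule prod.shift_bounds_cl_Suc_ivl)
        finally show ?thesis .
      qed
      ultimately show ?thesis by simp
    qed
    have CH: "Cv \<ge> Hv" unfolding Cv_def Hv_def
    proof (rule prod_mono)
      fix m assume m: "m \<in> {Suc k..b-1}"
      have "lam (Suc m) < nu m" "nu m < lam m" using il mrange[OF m] unfolding interl_def by auto
      moreover have "lam m \<le> lam j" using sdec_le[OF sd] m ja ab by auto
      ultimately show "0 \<le> lam j - nu m \<and> lam j - nu m \<le> lam j - lam (Suc m)" by simp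
    qed
    have lk: "lam (Suc k) \<le> lam j" using sdec_le[OF sd] ja k by auto
    have wj: "w j \<ge> 0" using wpos ja k by auto
    have eq: "poly G (lam j) / d = w j * Bv / (W * Hv)"
      using e1 e2 dnz Hpos W by (simp add: field_simps)
    have "w j / W * (lam j - lam (Suc k)) = w j * ((lam j - lam (Suc k)) * Hv) / (W * Hv)"
      using Hpos W by (simp add: field_simps)
    also have "\<dots> \<le> w j * Bv / (W * Hv)"
    proof (rule divide_right_mono)
      have "(lam j - lam (Suc k)) * Hv \<le> (lam j - lam (Suc k)) * Cv"
        using CH lk by (intro mult_left_mono) auto
      then show "w j * ((lam j - lam (Suc k)) * Hv) \<le> w j * Bv" unfolding bsplit using wj by (rule mult_left_mono)
      show "0 \<le> W * Hv" using W Hpos by simp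
    qed
    finally show ?thesis using eq Az unfolding d_def by simp
  qed
  have "(\<Sum>j\<in>K. w j / W * (lam j - lam (Suc k))) \<le> (\<Sum>j\<in>K. lam j) - (\<Sum>j\<in>K. nu j)"
    unfolding lhs[symmetric] lag by (rule sum_mono) (rule tm)
  then show ?thesis unfolding K_def by simp
qed

lemma trace_PP:
  assumes ab: "a < b" and fac: "PP a b lam w = smult W (\<Prod>j=a..b-1. [:- nu j, 1:])"
  shows "W * (\<Sum>j=a..b-1. nu j) = (\<Sum>i=a..b. w i) * (\<Sum>i=a..b. lam i) - (\<Sum>i=a..b. w i * lam i)"
proof -
  have c1: "coeff (PP a b lam w) (b - a - 1) = - (\<Sum>i=a..b. w i * (\<Sum>j\<in>{a..b} - {i}. lam j))"
    using PP_coeffs[OF ab] by blast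
  have fin: "finite {a..b-1}" and ne: "{a..b-1} \<noteq> {}" using ab by auto
  have cd: "card {a..b-1} = b - a" using ab by simp
  have c2: "coeff (PP a b lam w) (b - a - 1) = W * (- (\<Sum>j=a..b-1. nu j))"
    unfolding fac coeff_smult using prod_lin_props[OF fin, of nu] ne cd by simp
  have s: "(\<Sum>j\<in>{a..b} - {i}. lam j) = (\<Sum>i=a..b. lam i) - lam i" if "i \<in> {a..b}" for i
    using that by (simp add: sum_diff1)
  have "(\<Sum>i=a..b. w i * (\<Sum>j\<in>{a..b} - {i}. lam j)) = (\<Sum>i=a..b. w i * ((\<Sum>i=a..b. lam i) - lam i))"
    by (rule sum.cong) (use s in auto)
  also have "\<dots> = (\<Sum>i=a..b. w i) * (\<Sum>i=a..b. lam i) - (\<Sum>i=a..b. w i * lam i)"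
    by (simp add: right_diff_distrib sum_subtractf flip: sum_distrib_right)
  finally show ?thesis using c1 c2 by simp
qed

lemma count_above:
  assumes sd: "sdec a b lam" and j: "a \<le> j" "j < b" and t: "lam (Suc j) < t" "t < lam j"
    and i: "i \<in> {a..b}"
  shows "{m\<in>{a..b} - {i}. t < lam m} = {a..j} - {i}"
proof -
  have "t < lam m \<longleftrightarrow> m \<le> j" if "a \<le> m" "m \<le> b" for m
  proof
    assume "t < lam m"
    show "m \<le> j"
    proof (rule ccontr)
      assume "\<not> m \<le> j"
      then have "lam m \<le> lam (Suc j)" using sdec_le[OF sd] that j by auto
      then show False using t \<open>t < lam m\<close> by simp
    qed
  next
    assume "m \<le> j"
    then have "lam j \<le> lam m" using sdec_le[OF sd] that j by auto
    then show "t < lam m" using t by simp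
  qed
  then show ?thesis using j by auto
qed

lemma poly_PP_root:
  assumes "PP a c lam w = smult V (\<Prod>j=a..c-1. [:- nu j, 1:])" "a \<le> j" "j < c"
  shows "poly (PP a c lam w) (nu j) = 0"
  unfolding assms(1) poly_smult poly_prod using assms(2,3) by (subst prod_zero) auto

lemma mono_head:
  assumes sd: "sdec a b lam" and wpos: "\<And>i. a \<le> i \<Longrightarrow> i \<le> b \<Longrightarrow> w i \<ge> 0"
    and ilf: "interl a b lam mu" and facf: "PP a b lam w = smult W (\<Prod>j=a..b-1. [:- mu j, 1:])" and W: "W > 0"
    and c: "a < c" "c \<le> b"
    and ilh: "interl a c lam nu" and fach: "PP a c lam w = smult V (\<Prod>j=a..c-1. [:- nu j, 1:])"
    and j: "a \<le> j" "j < c"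
  shows "nu j \<le> mu j"
proof (rule ccontr)
  assume "\<not> nu j \<le> mu j"
  then have lt: "mu j < nu j" by simp
  define t where "t = nu j"
  have t: "lam (Suc j) < t" "t < lam j" using ilh j unfolding interl_def t_def by auto
  have jb: "j < b" using j c by simp
  have pos: "(-1) ^ (j - a) * (\<Prod>m=a..b-1. t - mu m) > 0"
    using root_loc(1)[OF sd ilf j(1) jb t] lt unfolding t_def by simp
  have P1: "(-1) ^ (j - a) * poly (PP a b lam w) t > 0"
    using pos W unfolding facf poly_smult poly_prod by (simp add: mult.left_commute)
  have split: "{a..b} = {a..c} \<union> {Suc c..b}" using c by auto
  have sp: "poly (PP a b lam w) t = (\<Sum>i\<in>{a..c}. w i * (\<Prod>m\<in>{a..b} - {i}. t - lam m))
                + (\<Sum>i\<in>{Suc c..b}. w i * (\<Prod>m\<in>{a..b} - {i}. t - lam m))"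
    unfolding poly_PP split by (rule sum.union_disjoint) auto
  have z: "(\<Sum>i\<in>{a..c}. w i * (\<Prod>m\<in>{a..b} - {i}. t - lam m)) = 0"
  proof -
    have "(\<Sum>i\<in>{a..c}. w i * (\<Prod>m\<in>{a..b} - {i}. t - lam m))
        = (\<Sum>i\<in>{a..c}. w i * ((\<Prod>m\<in>{a..c} - {i}. t - lam m) * (\<Prod>m\<in>{Suc c..b}. t - lam m)))"
    proof (rule sum.cong[OF refl])
      fix i assume i: "i \<in> {a..c}"
      have e: "{a..b} - {i} = ({a..c} - {i}) \<union> {Suc c..b}" using i c by auto
      have "(\<Prod>m\<in>({a..c} - {i}) \<union> {Suc c..b}. t - lam m) = (\<Prod>m\<in>{a..c} - {i}. t - lam m) * (\<Prod>m\<in>{Suc c..b}. t - lam m)"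
        by (rule prod.union_disjoint) auto
      then show "w i * (\<Prod>m\<in>{a..b} - {i}. t - lam m) = w i * ((\<Prod>m\<in>{a..c} - {i}. t - lam m) * (\<Prod>m\<in>{Suc c..b}. t - lam m))"
        unfolding e by simp
    qed
    also have "\<dots> = poly (PP a c lam w) t * (\<Prod>m\<in>{Suc c..b}. t - lam m)"
      unfolding poly_PP by (simp add: sum_distrib_right mult.assoc)
    also have "\<dots> = 0" using poly_PP_root[OF fach j] unfolding t_def by simp
    finally show ?thesis .
  qed
  have neg: "(-1) ^ (j - a) * (w i * (\<Prod>m\<in>{a..b} - {i}. t - lam m)) \<le> 0" if i: "i \<in> {Suc c..b}" for i
  proof -
    have ii: "i \<in> {a..b}" using i c by auto
    have cnt: "card {m\<in>{a..b} - {i}. t < lam m} = Suc (j - a)"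
      unfolding count_above[OF sd j(1) jb t ii] using i j c by simp
    have "(\<Prod>m\<in>{a..b} - {i}. t - lam m) = (-1) ^ Suc (j - a) * (\<Prod>m\<in>{a..b} - {i}. \<bar>t - lam m\<bar>)"
      using prod_sign[of "{a..b} - {i}" t lam] cnt by simp
    then have "(-1) ^ (j - a) * (w i * (\<Prod>m\<in>{a..b} - {i}. t - lam m))
        = - (((-1) ^ (j - a) * (-1) ^ (j - a)) * (w i * (\<Prod>m\<in>{a..b} - {i}. \<bar>t - lam m\<bar>)))"
      by (simp add: algebra_simps)
    also have "\<dots> \<le> 0" unfolding neg1_sq using wpos[of i] ii
      by (simp add: prod_nonneg)
    finally show ?thesis .
  qed
  have "(-1) ^ (j - a) * poly (PP a b lam w) t = (\<Sum>i\<in>{Suc c..b}. (-1) ^ (j - a) * (w i * (\<Prod>m\<in>{a..b} - {i}. t - lam m)))"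
    unfolding sp z by (simp add: sum_distrib_left)
  also have "\<dots> \<le> 0" by (rule sum_nonpos) (use neg in auto)
  finally show False using P1 by simp
qed

lemma mono_tail:
  assumes sd: "sdec a b lam" and wpos: "\<And>i. a \<le> i \<Longrightarrow> i \<le> b \<Longrightarrow> w i \<ge> 0"
    and ilf: "interl a b lam mu" and facf: "PP a b lam w = smult W (\<Prod>j=a..b-1. [:- mu j, 1:])" and W: "W > 0"
    and d: "a \<le> d" "d < b"
    and ilt: "interl d b lam nu" and fact: "PP d b lam w = smult V (\<Prod>j=d..b-1. [:- nu j, 1:])"
    and j: "d \<le> j" "j < b"
  shows "mu j \<le> nu j"
proof (rule ccontr)
  assume "\<not> mu j \<le> nu j"
  then have lt: "nu j < mu j" by simp
  define t where "t = nu j"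
  have t: "lam (Suc j) < t" "t < lam j" using ilt j unfolding interl_def t_def by auto
  have ja: "a \<le> j" using j d by simp
  have ng: "(-1) ^ (j - a) * (\<Prod>m=a..b-1. t - mu m) < 0"
    using root_loc(2)[OF sd ilf ja j(2) t] lt unfolding t_def by simp
  have P1: "(-1) ^ (j - a) * poly (PP a b lam w) t < 0"
  proof -
    have "(-1) ^ (j - a) * poly (PP a b lam w) t = W * ((-1) ^ (j - a) * (\<Prod>m=a..b-1. t - mu m))"
      unfolding facf poly_smult poly_prod by (simp add: mult.left_commute)
    also have "\<dots> < 0" using ng W by (simp add: mult_pos_neg)
    finally show ?thesis .
  qed
  have split: "{a..b} = {a..<d} \<union> {d..b}" using d by auto
  have sp: "poly (PP a b lam w) t = (\<Sum>i\<in>{a..<d}. w i * (\<Prod>m\<in>{a..b} - {i}. t - lam m))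
                + (\<Sum>i\<in>{d..b}. w i * (\<Prod>m\<in>{a..b} - {i}. t - lam m))"
    unfolding poly_PP split by (rule sum.union_disjoint) auto
  have z: "(\<Sum>i\<in>{d..b}. w i * (\<Prod>m\<in>{a..b} - {i}. t - lam m)) = 0"
  proof -
    have "(\<Sum>i\<in>{d..b}. w i * (\<Prod>m\<in>{a..b} - {i}. t - lam m))
        = (\<Sum>i\<in>{d..b}. w i * ((\<Prod>m\<in>{d..b} - {i}. t - lam m) * (\<Prod>m\<in>{a..<d}. t - lam m)))"
    proof (rule sum.cong[OF refl])
      fix i assume i: "i \<in> {d..b}"
      have e: "{a..b} - {i} = ({d..b} - {i}) \<union> {a..<d}" using i d by auto
      have "(\<Prod>m\<in>({d..b} - {i}) \<union> {a..<d}. t - lam m) = (\<Prod>m\<in>{d..b} - {i}. t - lam m) * (\<Prod>m\<in>{a..<d}. t - lam m)"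
        by (rule prod.union_disjoint) auto
      then show "w i * (\<Prod>m\<in>{a..b} - {i}. t - lam m) = w i * ((\<Prod>m\<in>{d..b} - {i}. t - lam m) * (\<Prod>m\<in>{a..<d}. t - lam m))"
        unfolding e by simp
    qed
    also have "\<dots> = poly (PP d b lam w) t * (\<Prod>m\<in>{a..<d}. t - lam m)"
      unfolding poly_PP by (simp add: sum_distrib_right mult.assoc)
    also have "\<dots> = 0" using poly_PP_root[OF fact j] unfolding t_def by simp
    finally show ?thesis .
  qed
  have ps: "(-1) ^ (j - a) * (w i * (\<Prod>m\<in>{a..b} - {i}. t - lam m)) \<ge> 0" if i: "i \<in> {a..<d}" for i
  proof -
    have ii: "i \<in> {a..b}" using i d by auto
    have cnt: "card {m\<in>{a..b} - {i}. t < lam m} = j - a"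
      unfolding count_above[OF sd ja j(2) t ii] using i j d by simp
    have "(\<Prod>m\<in>{a..b} - {i}. t - lam m) = (-1) ^ (j - a) * (\<Prod>m\<in>{a..b} - {i}. \<bar>t - lam m\<bar>)"
      using prod_sign[of "{a..b} - {i}" t lam] cnt by simp
    then have "(-1) ^ (j - a) * (w i * (\<Prod>m\<in>{a..b} - {i}. t - lam m))
        = ((-1) ^ (j - a) * (-1) ^ (j - a)) * (w i * (\<Prod>m\<in>{a..b} - {i}. \<bar>t - lam m\<bar>))"
      by (simp add: algebra_simps)
    also have "\<dots> \<ge> 0" unfolding neg1_sq using wpos[of i] ii
      by (simp add: prod_nonneg)
    finally show ?thesis .
  qed
  have "(-1) ^ (j - a) * poly (PP a b lam w) t = (\<Sum>i\<in>{a..<d}. (-1) ^ (j - a) * (w i * (\<Prod>m\<in>{a..b} - {i}. t - lam m)))"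
    unfolding sp z by (simp add: sum_distrib_left)
  also have "\<dots> \<ge> 0" by (rule sum_nonneg) (use ps in auto)
  finally show False using P1 by simp
qed

lemma sdec_sub: "sdec a b lam \<Longrightarrow> a \<le> a' \<Longrightarrow> b' \<le> b \<Longrightarrow> sdec a' b' lam"
  unfolding sdec_def by auto

lemma core:
  fixes n :: nat and lam w mu :: "nat \<Rightarrow> real"
  assumes n: "n \<ge> 2" and sd: "sdec 1 n lam"
    and wp: "\<And>i. 1 \<le> i \<Longrightarrow> i \<le> n \<Longrightarrow> w i > 0"
    and il: "interl 1 n lam mu" and fac: "PP 1 n lam w = smult 1 (\<Prod>j=1..n-1. [:- mu j, 1:])"
    and lr: "1 \<le> l" "l \<le> r" "r \<le> n - 1"
  shows "(\<Sum>j=l..r. lam (j+1)) + (\<Sum>j=l..r. w (j+1) / (\<Sum>i=1..r+1. w i) * (lam l - lam (j+1)))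
           \<le> (\<Sum>j=l..r. mu j) \<and>
         (\<Sum>j=l..r. mu j)
           \<le> (\<Sum>j=l..r. lam j) - (\<Sum>j=l..r. w j / (\<Sum>i=l..n. w i) * (lam j - lam (r+1)))"
proof
  have wnn: "\<And>i. 1 \<le> i \<Longrightarrow> i \<le> n \<Longrightarrow> w i \<ge> 0" using wp less_imp_le by blast
  show "(\<Sum>j=l..r. mu j) \<le> (\<Sum>j=l..r. lam j) - (\<Sum>j=l..r. w j / (\<Sum>i=l..n. w i) * (lam j - lam (r+1)))"
  proof -
    have ln: "l < n" using lr n by linarith
    have sdt: "sdec l n lam" using sdec_sub[OF sd] lr by auto
    obtain nu where ilt: "interl l n lam nu" and fact: "PP l n lam w = smult (\<Sum>i=l..n. w i) (\<Prod>j=l..n-1. [:- nu j, 1:])"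
      using PP_roots[OF ln sdt] wp lr by (metis le_trans)
    have U: "(\<Sum>i=l..n. w i) > 0" using ln wp lr by (intro sum_pos) auto
    have "(\<Sum>j=l..r. mu j) \<le> (\<Sum>j=l..r. nu j)"
    proof (rule sum_mono)
      fix j assume j: "j \<in> {l..r}"
      show "mu j \<le> nu j"
        by (rule mono_tail[OF sd wnn il fac _ _ ln ilt fact]) (use j lr n in auto)
    qed
    also have "\<dots> \<le> (\<Sum>j=l..r. lam j) - (\<Sum>j=l..r. w j / (\<Sum>i=l..n. w i) * (lam j - lam (Suc r)))"
      by (rule prefix_bound[OF ln sdt _ ilt fact U]) (use wnn lr n in auto)
    finally show ?thesis by simp
  qed
next
  have wnn: "\<And>i. 1 \<le> i \<Longrightarrow> i \<le> n \<Longrightarrow> w i \<ge> 0" using wp less_imp_le by blast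
  define c where "c = Suc r"
  have c1: "1 < c" "c \<le> n" using lr n unfolding c_def by auto
  have sdh: "sdec 1 c lam" using sdec_sub[OF sd] c1 by auto
  define L where "L = (\<Sum>i=1..c. w i)"
  obtain nu where ilh: "interl 1 c lam nu" and fach: "PP 1 c lam w = smult L (\<Prod>j=1..c-1. [:- nu j, 1:])"
    using PP_roots[OF c1(1) sdh] wp c1 unfolding L_def by (metis le_trans)
  have Lp: "L > 0" unfolding L_def using c1 wp by (intro sum_pos) auto
  have mono: "(\<Sum>j=l..r. nu j) \<le> (\<Sum>j=l..r. mu j)"
  proof (rule sum_mono)
    fix j assume j: "j \<in> {l..r}"
    show "nu j \<le> mu j"
      by (rule mono_head[OF sd wnn il fac _ c1 ilh fach]) (use j lr c_def in auto)
  qed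
  have tr: "L * (\<Sum>j=1..r. nu j) = L * (\<Sum>i=1..c. lam i) - (\<Sum>i=1..c. w i * lam i)"
    using trace_PP[OF c1(1) fach] unfolding L_def c_def by simp
  have pre: "(\<Sum>j=1..l-1. nu j) \<le> (\<Sum>j=1..l-1. lam j) - (\<Sum>j=1..l-1. w j / L * (lam j - lam l))"
  proof (cases "l = 1")
    case True then show ?thesis by simp
  next
    case False
    then have "Suc (l - 1) = l" "1 \<le> l - 1" "l - 1 < c" using lr c_def by auto
    then show ?thesis
      using prefix_bound[OF c1(1) sdh _ ilh fach Lp, of "l - 1"] wnn c1 by auto
  qed
  define HW where "HW = (\<Sum>j=1..l-1. w j)"
  define HWL where "HWL = (\<Sum>j=1..l-1. w j * lam j)"
  define HL where "HL = (\<Sum>j=1..l-1. lam j)"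
  define MW where "MW = (\<Sum>j=Suc l..c. w j)"
  define MWL where "MWL = (\<Sum>j=Suc l..c. w j * lam j)"
  define MLs where "MLs = (\<Sum>j=Suc l..c. lam j)"
  have splitH: "\<And>f :: nat \<Rightarrow> real. (\<Sum>j=1..c. f j) = (\<Sum>j=1..l-1. f j) + f l + (\<Sum>j=Suc l..c. f j)"
  proof -
    fix f :: "nat \<Rightarrow> real"
    have e: "{1..c} = {1..l-1} \<union> ({l} \<union> {Suc l..c})" using lr c_def by auto
    show "(\<Sum>j=1..c. f j) = (\<Sum>j=1..l-1. f j) + f l + (\<Sum>j=Suc l..c. f j)"
      unfolding e by (subst sum.union_disjoint, auto)+
  qed
  have splitN: "(\<Sum>j=1..r. nu j) = (\<Sum>j=1..l-1. nu j) + (\<Sum>j=l..r. nu j)"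
  proof -
    have e: "{1..r} = {1..l-1} \<union> {l..r}" using lr by auto
    show ?thesis unfolding e by (rule sum.union_disjoint) auto
  qed
  have Lsplit: "L = HW + w l + MW" unfolding L_def HW_def MW_def by (rule splitH)
  have tr2: "L * (\<Sum>j=1..r. nu j) = L * (HL + lam l + MLs) - (HWL + w l * lam l + MWL)"
    using tr splitH[of lam] splitH[of "\<lambda>i. w i * lam i"] unfolding HL_def MLs_def HWL_def MWL_def by simp
  have pre2: "L * (\<Sum>j=1..l-1. nu j) \<le> L * HL - (HWL - lam l * HW)"
  proof -
    have "(\<Sum>j=1..l-1. w j / L * (lam j - lam l)) = (\<Sum>j=1..l-1. (w j * lam j - lam l * w j) / L)"
      by (rule sum.cong) (use Lp in \<open>simp_all add: field_simps\<close>)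
    also have "\<dots> = (\<Sum>j=1..l-1. (w j * lam j - lam l * w j)) / L" by (simp add: sum_divide_distrib)
    also have "\<dots> = (HWL - lam l * HW) / L" unfolding HWL_def HW_def by (simp add: sum_subtractf sum_distrib_left)
    finally have "(\<Sum>j=1..l-1. w j / L * (lam j - lam l)) = (HWL - lam l * HW) / L" .
    then have "(\<Sum>j=1..l-1. nu j) \<le> HL - (HWL - lam l * HW) / L" using pre unfolding HL_def by simp
    then have "L * (\<Sum>j=1..l-1. nu j) \<le> L * (HL - (HWL - lam l * HW) / L)" using Lp by simp
    also have "\<dots> = L * HL - (HWL - lam l * HW)" using Lp by (simp add: field_simps)
    finally show ?thesis .
  qed
  have key: "L * MLs + (lam l * MW - MWL) \<le> L * (\<Sum>j=l..r. nu j)"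
  proof -
    have "L * (\<Sum>j=l..r. nu j) = L * (\<Sum>j=1..r. nu j) - L * (\<Sum>j=1..l-1. nu j)"
      using splitN by (simp add: algebra_simps)
    moreover have "L * lam l = HW * lam l + w l * lam l + MW * lam l" using Lsplit by (simp add: algebra_simps)
    ultimately show ?thesis using tr2 pre2 by (simp add: algebra_simps)
  qed
  have tgt1: "(\<Sum>j=l..r. lam (j+1)) = MLs"
    unfolding MLs_def c_def using sum.shift_bounds_cl_Suc_ivl[of lam l r] by simp
  have tgt2: "(\<Sum>j=l..r. w (j+1) / (\<Sum>i=1..r+1. w i) * (lam l - lam (j+1))) = (lam l * MW - MWL) / L"
  proof -
    have "(\<Sum>j=l..r. w (j+1) / (\<Sum>i=1..r+1. w i) * (lam l - lam (j+1)))
        = (\<Sum>j=Suc l..Suc r. w j / L * (lam l - lam j))"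
      unfolding L_def c_def using sum.shift_bounds_cl_Suc_ivl[of "\<lambda>j. w j / (\<Sum>i=1..Suc r. w i) * (lam l - lam j)" l r] by simp
    also have "\<dots> = (\<Sum>j=Suc l..Suc r. (lam l * w j - w j * lam j) / L)"
      by (rule sum.cong) (use Lp in \<open>simp_all add: field_simps\<close>)
    also have "\<dots> = (\<Sum>j=Suc l..Suc r. (lam l * w j - w j * lam j)) / L" by (rule sum_divide_distrib[symmetric])
    also have "\<dots> = (lam l * MW - MWL) / L" unfolding MW_def MWL_def c_def by (simp only: sum_subtractf sum_distrib_left)
    finally show ?thesis .
  qed
  have "MLs + (lam l * MW - MWL) / L \<le> (\<Sum>j=l..r. nu j)"
  proof -
    have "MLs + (lam l * MW - MWL) / L = (L * MLs + (lam l * MW - MWL)) / L" using Lp by (simp add: field_simps)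
    also have "\<dots> \<le> (L * (\<Sum>j=l..r. nu j)) / L" using key Lp by (intro divide_right_mono) auto
    also have "\<dots> = (\<Sum>j=l..r. nu j)" using Lp by simp
    finally show ?thesis .
  qed
  then show "(\<Sum>j=l..r. lam (j+1)) + (\<Sum>j=l..r. w (j+1) / (\<Sum>i=1..r+1. w i) * (lam l - lam (j+1)))
           \<le> (\<Sum>j=l..r. mu j)"
    unfolding tgt1 tgt2 using mono by linarith
qed

lemma roots_unique:
  fixes x y :: "nat \<Rightarrow> real"
  assumes "(\<Prod>j=p..q. [:- x j, 1:]) = (\<Prod>j=p..q. [:- y j, 1:])"
    and "\<And>i j. p \<le> i \<Longrightarrow> i \<le> j \<Longrightarrow> j \<le> q \<Longrightarrow> x j \<le> x i"
    and "\<And>i j. p \<le> i \<Longrightarrow> i \<le> j \<Longrightarrow> j \<le> q \<Longrightarrow> y j \<le> y i"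
  shows "p \<le> j \<Longrightarrow> j \<le> q \<Longrightarrow> x j = y j"
  using assms
proof (induction "Suc q - p" arbitrary: p)
  case 0
  then show ?case by simp
next
  case (Suc k)
  have pq: "p \<le> q" using Suc.prems by simp
  have e: "{p..q} = insert p {Suc p..q}" using pq by auto
  have xr: "\<exists>i\<in>{p..q}. y i = x p"
  proof -
    have "poly (\<Prod>j=p..q. [:- x j, 1:]) (x p) = 0" unfolding poly_prod using pq by (intro prod_zero) auto
    then have "poly (\<Prod>j=p..q. [:- y j, 1:]) (x p) = 0" using Suc.prems(3) by simp
    then show ?thesis unfolding poly_prod by (auto simp: prod_zero_iff)
  qed
  have yr: "\<exists>i\<in>{p..q}. x i = y p"
  proof -
    have "poly (\<Prod>j=p..q. [:- y j, 1:]) (y p) = 0" unfolding poly_prod using pq by (intro prod_zero) auto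
    then have "poly (\<Prod>j=p..q. [:- x j, 1:]) (y p) = 0" using Suc.prems(3) by simp
    then show ?thesis unfolding poly_prod by (auto simp: prod_zero_iff)
  qed
  have "x p \<le> y p"
  proof -
    obtain i where i: "i \<in> {p..q}" "y i = x p" using xr by blast
    then have "y i \<le> y p" using Suc.prems(5)[of p i] by auto
    then show ?thesis using i by simp
  qed
  moreover have "y p \<le> x p"
  proof -
    obtain i where i: "i \<in> {p..q}" "x i = y p" using yr by blast
    then have "x i \<le> x p" using Suc.prems(4)[of p i] by auto
    then show ?thesis using i by simp
  qed
  ultimately have xyp: "x p = y p" by simp
  have "[:- x p, 1:] * (\<Prod>j=Suc p..q. [:- x j, 1:]) = [:- x p, 1:] * (\<Prod>j=Suc p..q. [:- y j, 1:])"
  proof -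
    have ex: "(\<Prod>j=p..q. [:- x j, 1:]) = [:- x p, 1:] * (\<Prod>j=Suc p..q. [:- x j, 1:])"
      unfolding e by (rule prod.insert) auto
    have ey: "(\<Prod>j=p..q. [:- y j, 1:]) = [:- y p, 1:] * (\<Prod>j=Suc p..q. [:- y j, 1:])"
      unfolding e by (rule prod.insert) auto
    show ?thesis using Suc.prems(3) ex ey xyp by metis
  qed
  then have rest: "(\<Prod>j=Suc p..q. [:- x j, 1:]) = (\<Prod>j=Suc p..q. [:- y j, 1:])"
    by (subst (asm) mult_left_cancel) auto
  show ?case
  proof (cases "j = p")
    case True then show ?thesis using xyp by simp
  next
    case False
    then have "Suc p \<le> j" using Suc.prems by simp
    then show ?thesis
      using Suc.hyps(1)[of "Suc p"] Suc.hyps(2) rest Suc.prems by simp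
  qed
qed

lemma multi_subseq:
  fixes X :: "nat \<Rightarrow> nat \<Rightarrow> real"
  assumes bd: "\<And>m j. \<bar>X m j\<bar> \<le> B"
  shows "\<exists>s. strict_mono s \<and> (\<forall>j<K. convergent (\<lambda>m. X (s m) j))"
proof (induction K)
  case 0
  show ?case by (rule exI[of _ id]) (simp add: strict_mono_def)
next
  case (Suc K)
  then obtain s where s: "strict_mono s" "\<forall>j<K. convergent (\<lambda>m. X (s m) j)" by blast
  obtain t where t: "strict_mono t" "monoseq (\<lambda>m. X (s (t m)) K)"
    using seq_monosub[of "\<lambda>m. X (s m) K"] by blast
  have "Bseq (\<lambda>m. X (s (t m)) K)" using bd by (intro BseqI') simp
  then have cK: "convergent (\<lambda>m. X (s (t m)) K)" using t(2) by (rule Bseq_monoseq_convergent)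
  have st: "strict_mono (s \<circ> t)" using s(1) t(1) by (rule strict_mono_o)
  have "convergent (\<lambda>m. X (s (t m)) j)" if j: "j < Suc K" for j
  proof (cases "j = K")
    case True then show ?thesis using cK by simp
  next
    case False
    then have "convergent (\<lambda>m. X (s m) j)" using s(2) j by simp
    then have "(\<lambda>m. X (s m) j) \<longlonglongrightarrow> lim (\<lambda>m. X (s m) j)" by (simp add: convergent_LIMSEQ_iff)
    from LIMSEQ_subseq_LIMSEQ[OF this t(1)] show ?thesis by (auto simp: convergent_def o_def)
  qed
  then show ?case using st by (auto simp: o_def)
qed

theorem theorem2p2:
  fixes n :: nat and lam w mu :: "nat \<Rightarrow> real"
  assumes "n \<ge> 2"
    and lam_mono: "\<And>i j. 1 \<le> i \<Longrightarrow> i \<le> j \<Longrightarrow> j \<le> n \<Longrightarrow> lam j \<le> lam i"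
    and w_nonneg: "\<And>i. 1 \<le> i \<Longrightarrow> i \<le> n \<Longrightarrow> w i \<ge> 0"
    and w_sum: "(\<Sum>i=1..n. w i) = 1"
    and mu_mono: "\<And>i j. 1 \<le> i \<Longrightarrow> i \<le> j \<Longrightarrow> j \<le> n - 1 \<Longrightarrow> mu j \<le> mu i"
    and mu_roots: "interlace_poly n lam w = (\<Prod>j=1..n-1. [:- mu j, 1:])"
    and "1 \<le> l" and "l \<le> r" and "r \<le> n - 1"
    and U_ne: "(\<Sum>i=l..n. w i) \<noteq> 0"
    and L_ne: "(\<Sum>i=1..r+1. w i) \<noteq> 0"
  shows "(\<Sum>j=l..r. lam (j+1)) + (\<Sum>j=l..r. w (j+1) / (\<Sum>i=1..r+1. w i) * (lam l - lam (j+1)))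
           \<le> (\<Sum>j=l..r. mu j) \<and>
         (\<Sum>j=l..r. mu j)
           \<le> (\<Sum>j=l..r. lam j) - (\<Sum>j=l..r. w j / (\<Sum>i=l..n. w i) * (lam j - lam (r+1)))"
proof -
  note n = \<open>n \<ge> 2\<close>
  note lr = \<open>1 \<le> l\<close> \<open>l \<le> r\<close> \<open>r \<le> n - 1\<close>
  define e where "e m = inverse (real (Suc m))" for m
  have epos: "e m > 0" for m unfolding e_def by simp
  have ele: "e m \<le> 1" for m unfolding e_def by (simp add: inverse_le_1_iff)
  have elim: "e \<longlonglongrightarrow> 0" unfolding e_def by (rule LIMSEQ_inverse_real_of_nat)
  define lamE where "lamE m i = lam i - real i * e m" for m i
  define wE where "wE m i = (w i + e m) / (1 + real n * e m)" for m i
  have sdE: "sdec 1 n (lamE m)" for m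
    unfolding sdec_def lamE_def
  proof (intro allI impI)
    fix i j assume ij: "1 \<le> i" "i < j" "j \<le> n"
    have "lam j \<le> lam i" using lam_mono ij by auto
    moreover have "real i * e m < real j * e m" using ij epos[of m] by simp
    ultimately show "lam j - real j * e m < lam i - real i * e m" by simp
  qed
  have Dpos: "1 + real n * e m > 0" for m using epos[of m] by (simp add: add_pos_nonneg)
  have wEp: "wE m i > 0" if "1 \<le> i" "i \<le> n" for m i
    unfolding wE_def using w_nonneg[OF that] epos[of m] Dpos[of m] by simp
  have wEs: "(\<Sum>i=1..n. wE m i) = 1" for m
  proof -
    have "(\<Sum>i=1..n. wE m i) = (\<Sum>i=1..n. w i + e m) / (1 + real n * e m)"
      unfolding wE_def by (rule sum_divide_distrib[symmetric])
    also have "\<dots> = (1 + real n * e m) / (1 + real n * e m)"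
      using w_sum by (simp add: sum.distrib)
    also have "\<dots> = 1" using Dpos[of m] by simp
    finally show ?thesis .
  qed
  have n1: "1 < n" using n by simp
  have "\<forall>m. \<exists>nu. interl 1 n (lamE m) nu \<and> PP 1 n (lamE m) (wE m) = smult 1 (\<Prod>j=1..n-1. [:- nu j, 1:])"
  proof
    fix m
    have "\<exists>nu. interl 1 n (lamE m) nu \<and> PP 1 n (lamE m) (wE m) = smult (\<Sum>i=1..n. wE m i) (\<Prod>j=1..n-1. [:- nu j, 1:])"
      by (rule PP_roots[OF n1 sdE]) (rule wEp)
    then show "\<exists>nu. interl 1 n (lamE m) nu \<and> PP 1 n (lamE m) (wE m) = smult 1 (\<Prod>j=1..n-1. [:- nu j, 1:])"
      unfolding wEs .
  qed
  then obtain muE where muEall: "\<forall>m. interl 1 n (lamE m) (muE m) \<and> PP 1 n (lamE m) (wE m) = smult 1 (\<Prod>j=1..n-1. [:- muE m j, 1:])"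
    by (rule choice[THEN exE]) blast
  have muE: "\<And>m. interl 1 n (lamE m) (muE m)" using muEall by blast
  have facE: "\<And>m. PP 1 n (lamE m) (wE m) = smult 1 (\<Prod>j=1..n-1. [:- muE m j, 1:])" using muEall by blast
  have bnds: "(\<Sum>j=l..r. lamE m (j+1)) + (\<Sum>j=l..r. wE m (j+1) / (\<Sum>i=1..r+1. wE m i) * (lamE m l - lamE m (j+1)))
           \<le> (\<Sum>j=l..r. muE m j) \<and>
         (\<Sum>j=l..r. muE m j)
           \<le> (\<Sum>j=l..r. lamE m j) - (\<Sum>j=l..r. wE m j / (\<Sum>i=l..n. wE m i) * (lamE m j - lamE m (r+1)))" for m
    by (rule core[OF n sdE wEp muE facE lr])
  define B where "B = (\<Sum>i=1..n. \<bar>lam i\<bar>) + real n"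
  have lamEb: "\<bar>lamE m i\<bar> \<le> B" if "1 \<le> i" "i \<le> n" for m i
  proof -
    have "\<bar>lam i\<bar> \<le> (\<Sum>i=1..n. \<bar>lam i\<bar>)" using that by (intro member_le_sum) auto
    moreover have "real i * e m \<le> real n"
      using that ele[of m] epos[of m] mult_mono[of "real i" "real n" "e m" 1] by simp
    moreover have "real i * e m \<ge> 0" using epos[of m] by simp
    ultimately show ?thesis unfolding lamE_def B_def by linarith
  qed
  have muEb: "\<bar>muE m j\<bar> \<le> B" if "1 \<le> j" "j \<le> n - 1" for m j
  proof -
    have "lamE m (Suc j) < muE m j" "muE m j < lamE m j" using muE[of m] that n unfolding interl_def by auto
    moreover have "\<bar>lamE m (Suc j)\<bar> \<le> B" "\<bar>lamE m j\<bar> \<le> B" using that n by (auto intro!: lamEb)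
    ultimately show ?thesis by linarith
  qed
  define Y where "Y m j = (if 1 \<le> j \<and> j \<le> n - 1 then muE m j else 0)" for m j
  have Yb: "\<bar>Y m j\<bar> \<le> B" for m j
  proof -
    have "B \<ge> 0" unfolding B_def by (simp add: sum_nonneg)
    then show ?thesis unfolding Y_def using muEb by auto
  qed
  obtain s where s: "strict_mono s" and conv: "\<forall>j<n. convergent (\<lambda>m. Y (s m) j)"
    using multi_subseq[of Y B n, OF Yb] by blast
  define nu where "nu j = lim (\<lambda>m. Y (s m) j)" for j
  have nulim: "(\<lambda>m. muE (s m) j) \<longlonglongrightarrow> nu j" if "1 \<le> j" "j \<le> n - 1" for j
  proof -
    have "(\<lambda>m. Y (s m) j) \<longlonglongrightarrow> nu j" using conv that n unfolding nu_def convergent_LIMSEQ_iff by auto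
    then show ?thesis using that unfolding Y_def by simp
  qed
  have nu_mono: "nu j \<le> nu i" if "1 \<le> i" "i \<le> j" "j \<le> n - 1" for i j
  proof (rule LIMSEQ_le[OF nulim nulim])
    show "\<exists>N. \<forall>m\<ge>N. muE (s m) j \<le> muE (s m) i"
    proof (intro exI allI impI)
      fix m :: nat
      show "muE (s m) j \<le> muE (s m) i"
      proof (cases "i = j")
        case True then show ?thesis by simp
      next
        case False
        then have ij: "i < j" using that by simp
        have "muE (s m) j < lamE (s m) j" using muE[of "s m"] that n unfolding interl_def by auto
        also have "lamE (s m) j \<le> lamE (s m) (Suc i)"
          using sdE[of "s m"] ij that unfolding sdec_def by (cases "Suc i = j") (auto intro: less_imp_le)
        also have "\<dots> < muE (s m) i" using muE[of "s m"] that ij n unfolding interl_def by auto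
        finally show ?thesis by simp
      qed
    qed
  qed (use that in auto)
  have lamElim: "(\<lambda>m. lamE m i) \<longlonglongrightarrow> lam i" for i
  proof -
    have "(\<lambda>m. lam i - real i * e m) \<longlonglongrightarrow> lam i - real i * 0"
      by (intro tendsto_intros elim)
    then show ?thesis unfolding lamE_def by simp
  qed
  have wElim: "(\<lambda>m. wE m i) \<longlonglongrightarrow> w i" for i
  proof -
    have "(\<lambda>m. (w i + e m) / (1 + real n * e m)) \<longlonglongrightarrow> (w i + 0) / (1 + real n * 0)"
      by (intro tendsto_intros elim) simp
    then show ?thesis unfolding wE_def by simp
  qed
  have sub: "(\<lambda>m. F (s m)) \<longlonglongrightarrow> L" if "F \<longlonglongrightarrow> L" for F :: "nat \<Rightarrow> real" and L
    using LIMSEQ_subseq_LIMSEQ[OF that s] by (simp add: o_def)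
  have polyeq: "poly (PP 1 n lam w) x = poly (\<Prod>j=1..n-1. [:- nu j, 1:]) x" for x
  proof -
    have l1: "(\<lambda>m. poly (PP 1 n (lamE m) (wE m)) x) \<longlonglongrightarrow> poly (PP 1 n lam w) x"
      unfolding poly_PP by (intro tendsto_intros lamElim wElim)
    have l2: "(\<lambda>m. poly (PP 1 n (lamE (s m)) (wE (s m))) x) \<longlonglongrightarrow> poly (\<Prod>j=1..n-1. [:- nu j, 1:]) x"
      unfolding facE poly_smult poly_prod by (simp, intro tendsto_intros nulim) auto
    show ?thesis using LIMSEQ_unique[OF sub[OF l1] l2] .
  qed
  have "PP 1 n lam w = (\<Prod>j=1..n-1. [:- nu j, 1:])" using polyeq by (intro poly_ext) auto
  moreover have "interlace_poly n lam w = PP 1 n lam w" unfolding interlace_poly_def PP_def ..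
  ultimately have eqprod: "(\<Prod>j=1..n-1. [:- mu j, 1:]) = (\<Prod>j=1..n-1. [:- nu j, 1:])" using mu_roots by simp
  have munu: "mu j = nu j" if "1 \<le> j" "j \<le> n - 1" for j
    by (rule roots_unique[OF eqprod mu_mono nu_mono that]) auto
  have Llim: "(\<lambda>m. \<Sum>i=1..r+1. wE (s m) i) \<longlonglongrightarrow> (\<Sum>i=1..r+1. w i)"
    by (intro tendsto_intros sub wElim)
  have Ulim: "(\<lambda>m. \<Sum>i=l..n. wE (s m) i) \<longlonglongrightarrow> (\<Sum>i=l..n. w i)"
    by (intro tendsto_intros sub wElim)
  have Slim: "(\<lambda>m. \<Sum>j=l..r. muE (s m) j) \<longlonglongrightarrow> (\<Sum>j=l..r. mu j)"
  proof -
    have "(\<lambda>m. \<Sum>j=l..r. muE (s m) j) \<longlonglongrightarrow> (\<Sum>j=l..r. nu j)"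
      by (intro tendsto_intros nulim) (use lr in auto)
    moreover have "(\<Sum>j=l..r. nu j) = (\<Sum>j=l..r. mu j)" using munu lr by (intro sum.cong) auto
    ultimately show ?thesis by simp
  qed
  have LHSlim: "(\<lambda>m. (\<Sum>j=l..r. lamE (s m) (j+1)) + (\<Sum>j=l..r. wE (s m) (j+1) / (\<Sum>i=1..r+1. wE (s m) i) * (lamE (s m) l - lamE (s m) (j+1))))
      \<longlonglongrightarrow> (\<Sum>j=l..r. lam (j+1)) + (\<Sum>j=l..r. w (j+1) / (\<Sum>i=1..r+1. w i) * (lam l - lam (j+1)))"
    by (intro tendsto_intros sub wElim lamElim Llim L_ne)
  have RHSlim: "(\<lambda>m. (\<Sum>j=l..r. lamE (s m) j) - (\<Sum>j=l..r. wE (s m) j / (\<Sum>i=l..n. wE (s m) i) * (lamE (s m) j - lamE (s m) (r+1))))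
      \<longlonglongrightarrow> (\<Sum>j=l..r. lam j) - (\<Sum>j=l..r. w j / (\<Sum>i=l..n. w i) * (lam j - lam (r+1)))"
    by (intro tendsto_intros sub wElim lamElim Ulim U_ne)
  show ?thesis
  proof
    show "(\<Sum>j=l..r. lam (j+1)) + (\<Sum>j=l..r. w (j+1) / (\<Sum>i=1..r+1. w i) * (lam l - lam (j+1))) \<le> (\<Sum>j=l..r. mu j)"
      by (rule LIMSEQ_le[OF LHSlim Slim]) (use bnds in blast)
    show "(\<Sum>j=l..r. mu j) \<le> (\<Sum>j=l..r. lam j) - (\<Sum>j=l..r. w j / (\<Sum>i=l..n. w i) * (lam j - lam (r+1)))"
      by (rule LIMSEQ_le[OF Slim RHSlim]) (use bnds in blast)
  qed
qed

end
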